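(* Let $n\ge0$, $a_{n,0},\dots,a_{n,n}\in\mathbb C$, and let $P_n$ be the associated polynomial. Then $$P_n(z)=\imath^n n!\sum_{k=0}^n a_{n,k}\binom{-\imath z-\tfrac12+k}{n}=\imath^n\sum_{k=0}^n a_{n,n-k}\left(-\imath z+\tfrac12-k\right)_n .$$ Equivalently, writing $P_n(z)=\sum_{k=0}^n b_{n,k}z^k$, for $0\le k\le n$, $$b_{n,k}=(-1)^k\imath^{n+k}\sum_{\ell=0}^n a_{n,\ell}\sum_{j=0}^{n-k}s(n,j+k)\binom{j+k}{k}\left(\ell-\tfrac12\right)^j .$$
   Context: $\imath=\sqrt{-1}$. $\mathcal{A}$ denotes the quotient of the free associative $\mathbb{C}$-algebra on two noncommuting generators $p,q$ by the two-sided ideal generated by $qp-pq-\imath$, and $z=\tfrac12(qp+pq)\in\mathcal A$. For $n\ge0$ and complex numbers $a_{n,0},\dots,a_{n,n}$, there is a unique polynomial $P_n\in\mathbb{C}[X]$ of degree at most $n$ with $\sum_{k=0}^n a_{n,k}q^kp^nq^{n-k}=P_n(z)$ in $\mathcal A$; it is called the polynomial associated to $\{a_{n,k}\}$. For a complex variable $x$, $\binom{x}{n}=\frac{1}{n!}\prod_{\ell=0}^{n-1}(x-\ell)$ and $(x)_n=x(x+1)\cdots(x+n-1)$. $s(n,k)$ denotes the (signed) Stirling numbers of the first kind. *)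

theory Defs
  imports Complex_Main "HOL-Computational_Algebra.Polynomial" "HOL-Combinatorics.Stirling"
begin

definition signed_stirling :: "nat \<Rightarrow> nat \<Rightarrow> complex" where
  "signed_stirling n k = (-1) ^ (n + k) * of_nat (stirling n k)"

text \<open>A complex algebra: a ring 'a together with a ring homomorphism c from the
  complex numbers into the centre of 'a (the scalar embedding).\<close>
definition complex_scalars :: "(complex \<Rightarrow> 'a::ring_1) \<Rightarrow> bool" where
  "complex_scalars c \<longleftrightarrow> c 1 = 1 \<and> (\<forall>x y. c (x + y) = c x + c y)
     \<and> (\<forall>x y. c (x * y) = c x * c y) \<and> (\<forall>x y. c x * y = y * c x)"

definition alg_poly_eval :: "(complex \<Rightarrow> 'a::ring_1) \<Rightarrow> complex poly \<Rightarrow> 'a \<Rightarrow> 'a" where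
  "alg_poly_eval c P x = (\<Sum>k\<le>degree P. c (coeff P k) * x ^ k)"

end

theory Submission
  imports Defs
begin

context
  fixes c :: "complex \<Rightarrow> 'a::ring_1"
  assumes cs: "complex_scalars c"
begin

lemma cs_1: "c 1 = 1" and cs_add: "c (x + y) = c x + c y" and cs_mult: "c (x * y) = c x * c y"
  and cs_comm: "c x * z = z * c x"
  using cs unfolding complex_scalars_def by blast+

lemma cs_0: "c 0 = 0"
  using cs_add[of 0 0] by simp

lemma cs_neg: "c (- x) = - c x"
proof -
  have "c x + c (- x) = 0" using cs_add[of x "-x"] by (simp add: cs_0)
  then show ?thesis by (metis add.inverse_unique)
qed

lemma cs_diff: "c (x - y) = c x - c y"
  using cs_add[of x "-y"] by (simp add: cs_neg)

lemma cs_sum: "c (sum f A) = (\<Sum>x\<in>A. c (f x))"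
  by (induct A rule: infinite_finite_induct) (auto simp: cs_0 cs_add)

lemma ape_bound:
  assumes "degree f \<le> N"
  shows "alg_poly_eval c f x = (\<Sum>k\<le>N. c (coeff f k) * x ^ k)"
proof -
  have "(\<Sum>k\<le>N. c (coeff f k) * x ^ k) = (\<Sum>k\<le>degree f. c (coeff f k) * x ^ k)"
    by (rule sum.mono_neutral_right) (auto simp: assms coeff_eq_0 cs_0)
  then show ?thesis unfolding alg_poly_eval_def by simp
qed

lemma ape_0: "alg_poly_eval c 0 x = 0"
  by (simp add: alg_poly_eval_def cs_0)

lemma ape_const: "alg_poly_eval c [:a:] x = c a"
  by (simp add: alg_poly_eval_def)

lemma ape_one: "alg_poly_eval c 1 x = 1"
  by (simp add: alg_poly_eval_def cs_1)

lemma ape_add: "alg_poly_eval c (f + g) x = alg_poly_eval c f x + alg_poly_eval c g x"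
proof -
  let ?N = "max (degree f) (degree g)"
  have "alg_poly_eval c (f + g) x = (\<Sum>k\<le>?N. c (coeff (f+g) k) * x ^ k)"
    by (rule ape_bound) (simp add: degree_add_le)
  also have "\<dots> = (\<Sum>k\<le>?N. c (coeff f k) * x ^ k) + (\<Sum>k\<le>?N. c (coeff g k) * x ^ k)"
    by (simp add: cs_add distrib_right sum.distrib)
  also have "\<dots> = alg_poly_eval c f x + alg_poly_eval c g x"
    using ape_bound[of f ?N x] ape_bound[of g ?N x] by simp
  finally show ?thesis .
qed

lemma ape_smult: "alg_poly_eval c (smult a f) x = c a * alg_poly_eval c f x"
proof -
  have "alg_poly_eval c (smult a f) x = (\<Sum>k\<le>degree f. c (coeff (smult a f) k) * x ^ k)"
    by (rule ape_bound) simp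
  also have "\<dots> = c a * alg_poly_eval c f x"
    by (simp add: alg_poly_eval_def cs_mult sum_distrib_left mult.assoc)
  finally show ?thesis .
qed

lemma ape_pCons: "alg_poly_eval c (pCons a f) x = c a + x * alg_poly_eval c f x"
proof -
  have "alg_poly_eval c (pCons a f) x = (\<Sum>k\<le>Suc (degree f). c (coeff (pCons a f) k) * x ^ k)"
    by (rule ape_bound) (simp add: degree_pCons_le)
  also have "\<dots> = c a + (\<Sum>k\<le>degree f. c (coeff f k) * x ^ Suc k)"
    by (subst sum.atMost_Suc_shift) simp
  also have "(\<Sum>k\<le>degree f. c (coeff f k) * x ^ Suc k) = x * alg_poly_eval c f x"
    unfolding alg_poly_eval_def sum_distrib_left
  proof (rule sum.cong)
    fix k
    have "c (coeff f k) * x ^ Suc k = (c (coeff f k) * x) * x ^ k" by (simp add: mult.assoc)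
    also have "\<dots> = (x * c (coeff f k)) * x ^ k" by (simp only: cs_comm)
    also have "\<dots> = x * (c (coeff f k) * x ^ k)" by (simp only: mult.assoc)
    finally show "c (coeff f k) * x ^ Suc k = x * (c (coeff f k) * x ^ k)" .
  qed simp
  finally show ?thesis .
qed

lemma ape_mult: "alg_poly_eval c (f * g) x = alg_poly_eval c f x * alg_poly_eval c g x"
proof (induct f rule: pCons_induct)
  case 0
  then show ?case by (simp add: ape_0)
next
  case (pCons a f)
  have "alg_poly_eval c (pCons a f * g) x = c a * alg_poly_eval c g x + (c 0 + x * alg_poly_eval c (f * g) x)"
    by (simp only: mult_pCons_left ape_add ape_smult ape_pCons)
  then show ?case by (simp add: pCons ape_pCons cs_0 distrib_right mult.assoc)
qed

lemma ape_sum: "alg_poly_eval c (sum F A) x = (\<Sum>k\<in>A. alg_poly_eval c (F k) x)"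
  by (induct A rule: infinite_finite_induct) (auto simp: ape_0 ape_add)

lemma ape_lin: "alg_poly_eval c [:a, 1:] x = c a + x"
  by (simp add: ape_pCons ape_const cs_1 ape_0)

lemma ape_shift:
  assumes "x * y = y * (x + c d)"
  shows "alg_poly_eval c f x * y = y * alg_poly_eval c (pcompose f [:d, 1:]) x"
proof (induct f rule: pCons_induct)
  case 0
  then show ?case by (simp add: ape_0)
next
  case (pCons a f)
  have "alg_poly_eval c (pCons a f) x * y = c a * y + x * (alg_poly_eval c f x * y)"
    by (simp add: ape_pCons distrib_right mult.assoc)
  also have "\<dots> = y * c a + x * y * alg_poly_eval c (pcompose f [:d, 1:]) x"
    by (simp only: pCons cs_comm[of a y] mult.assoc)
  also have "x * y * alg_poly_eval c (pcompose f [:d, 1:]) x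
     = y * ((c d + x) * alg_poly_eval c (pcompose f [:d, 1:]) x)"
    by (simp only: assms add.commute mult.assoc)
  also have "y * c a + y * ((c d + x) * alg_poly_eval c (pcompose f [:d, 1:]) x)
      = y * (c a + (c d + x) * alg_poly_eval c (pcompose f [:d, 1:]) x)"
    by (simp only: distrib_left)
  also have "\<dots> = y * alg_poly_eval c (pcompose (pCons a f) [:d, 1:]) x"
    by (simp only: pcompose_pCons ape_add ape_const ape_mult ape_lin)
  finally show ?case .
qed

end

definition Apoly :: "nat \<Rightarrow> complex poly" where
  "Apoly k = (\<Prod>m<k. [: \<i>/2 + \<i> * of_nat m, 1 :])"
definition Bpoly :: "nat \<Rightarrow> complex poly" where
  "Bpoly k = (\<Prod>m<k. [: -(\<i>/2) - \<i> * of_nat m, 1 :])"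

lemma poly_A: "poly (Apoly k) z = \<i>^k * pochhammer (-\<i>*z + 1/2) k"
proof -
  have "poly (Apoly k) z = (\<Prod>m<k. \<i> * (-\<i>*z + 1/2 + of_nat m))"
    unfolding Apoly_def poly_prod
    by (rule prod.cong) (simp_all add: algebra_simps)
  also have "\<dots> = \<i>^k * pochhammer (-\<i>*z + 1/2) k"
    by (simp add: prod.distrib pochhammer_prod atLeast0LessThan)
  finally show ?thesis .
qed

lemma poly_B: "poly (Bpoly k) z = (-\<i>)^k * pochhammer (1/2 + \<i>*z) k"
proof -
  have "poly (Bpoly k) z = (\<Prod>m<k. (-\<i>) * (1/2 + \<i>*z + of_nat m))"
    unfolding Bpoly_def poly_prod
    by (rule prod.cong) (simp_all add: algebra_simps)
  also have "\<dots> = (\<Prod>m<k. -\<i>) * (\<Prod>m<k. 1/2 + \<i>*z + of_nat m)"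
    by (rule prod.distrib)
  also have "\<dots> = (-\<i>)^k * pochhammer (1/2 + \<i>*z) k"
    by (simp only: prod_constant card_lessThan pochhammer_prod atLeast0LessThan)
  finally show ?thesis .
qed

lemma poly_T:
  assumes "l \<le> n"
  shows "poly (Apoly l * Bpoly (n - l)) z = \<i>^n * (-1)^n * pochhammer (-(-\<i>*z - 1/2 + of_nat l)) n"
proof -
  obtain d where d: "n = l + d" using assms le_Suc_ex by blast
  have m1: "(-1::complex)^n * (-1)^l = (-1)^d"
    unfolding d by (cases "even l") (simp_all add: power_add)
  have s: "\<i>^l * (-\<i>)^d = \<i>^n * (-1)^n * (-1)^l"
    by (simp only: m1 mult.assoc) (simp add: d power_add power_minus[of \<i>] mult.commute)
  have "pochhammer (-(-\<i>*z - 1/2 + of_nat l)) n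
      = pochhammer (-(-\<i>*z - 1/2 + of_nat l)) l * pochhammer (1/2 + \<i>*z) d"
    unfolding d pochhammer_product' by (simp add: algebra_simps)
  also have "pochhammer (-(-\<i>*z - 1/2 + of_nat l)) l = (-1)^l * pochhammer (-\<i>*z + 1/2) l"
    by (subst pochhammer_minus) (simp add: algebra_simps)
  finally have e: "pochhammer (-(-\<i>*z - 1/2 + of_nat l)) n
      = (-1)^l * pochhammer (-\<i>*z + 1/2) l * pochhammer (1/2 + \<i>*z) d" .
  have "poly (Apoly l * Bpoly (n - l)) z
     = \<i>^l * (-\<i>)^d * pochhammer (-\<i>*z + 1/2) l * pochhammer (1/2 + \<i>*z) d"
    by (simp add: poly_A poly_B d)
  also have "\<dots> = \<i>^n * (-1)^n * ((-1)^l * pochhammer (-\<i>*z + 1/2) l * pochhammer (1/2 + \<i>*z) d)"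
    by (simp only: s mult.assoc)
  finally show ?thesis using e by simp
qed


lemma pcomp_lin: "pcompose [:a, 1:] [:d, 1:] = [:a + d, 1 :: complex:]"
  by (simp add: pcompose_pCons)

lemma B_Suc: "Bpoly (Suc j) = [:-(\<i>/2), 1:] * pcompose (Bpoly j) [:-\<i>, 1:]"
proof -
  have e: "-(\<i>/2) - \<i> * of_nat (Suc m) = -(\<i>/2) - \<i> * of_nat m + -\<i>" for m
    by (simp add: algebra_simps)
  show ?thesis
    unfolding Bpoly_def pcompose_prod pcomp_lin prod.lessThan_Suc_shift e by simp
qed

lemma A_Suc: "Apoly (Suc j) = [:\<i>/2, 1:] * pcompose (Apoly j) [:\<i>, 1:]"
proof -
  have e: "\<i>/2 + \<i> * of_nat (Suc m) = \<i>/2 + \<i> * of_nat m + \<i>" for m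
    by (simp add: algebra_simps)
  show ?thesis
    unfolding Apoly_def pcompose_prod pcomp_lin prod.lessThan_Suc_shift e by simp
qed

context
  fixes c :: "complex \<Rightarrow> 'a::ring_1" and p q :: 'a
  assumes cs: "complex_scalars c"
    and comm: "q * p - p * q = c \<i>"
begin

abbreviation "Z \<equiv> c (1/2) * (q * p + p * q)"

lemma qp: "q * p = c \<i> + p * q"
  using comm by (metis diff_add_cancel add.commute)

lemma half: "c (1/2) + c (1/2) = 1"
  using cs_add[OF cs, of "1/2" "1/2"] cs_1[OF cs] by simp

lemma Z_pq: "Z = c (\<i>/2) + p * q"
proof -
  have "Z = c (1/2) * c \<i> + (c (1/2) * (p * q) + c (1/2) * (p * q))"
    by (simp only: qp distrib_left add.assoc)
  also have "c (1/2) * c \<i> = c (\<i>/2)"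
    by (simp add: cs_mult[OF cs, symmetric])
  also have "c (1/2) * (p * q) + c (1/2) * (p * q) = p * q"
    by (simp only: distrib_right[symmetric] half mult_1)
  finally show ?thesis .
qed

lemma pq_ev: "p * q = alg_poly_eval c [:-(\<i>/2), 1:] Z"
  by (simp add: ape_lin[OF cs] Z_pq cs_neg[OF cs])

lemma qp_ev: "q * p = alg_poly_eval c [:\<i>/2, 1:] Z"
proof -
  have e: "c \<i> = c (\<i>/2) + c (\<i>/2)" by (simp add: cs_add[OF cs, symmetric])
  have "q * p = c (\<i>/2) + (c (\<i>/2) + p * q)"
    by (simp only: qp e add.assoc)
  then show ?thesis by (simp only: ape_lin[OF cs] Z_pq[symmetric])
qed

lemma Zp: "Z * p = p * (Z + c \<i>)"
proof -
  have "Z * p = c (\<i>/2) * p + p * (q * p)"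
    by (simp only: Z_pq distrib_right mult.assoc)
  also have "\<dots> = p * c (\<i>/2) + p * (c \<i> + p * q)"
    by (simp only: qp cs_comm[OF cs])
  also have "\<dots> = p * (c (\<i>/2) + p * q + c \<i>)"
    by (simp only: distrib_left add_ac)
  finally show ?thesis by (simp only: Z_pq)
qed

lemma Zq: "Z * q = q * (Z + c (-\<i>))"
proof -
  have pq: "p * q = q * p + c (-\<i>)"
    by (simp add: qp cs_neg[OF cs])
  have Z2: "Z = c (-(\<i>/2)) + q * p"
  proof -
    have h: "c (\<i>/2) + c (-\<i>) = c (-(\<i>/2))" by (simp add: cs_add[OF cs, symmetric])
    have "Z = c (\<i>/2) + (q * p + c (-\<i>))"
      by (subst Z_pq) (simp only: pq)
    then show ?thesis by (metis h add.assoc add.commute)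
  qed
  have "Z * q = c (-(\<i>/2)) * q + q * (p * q)"
    by (simp only: Z2 distrib_right mult.assoc)
  also have "\<dots> = q * c (-(\<i>/2)) + q * (q * p + c (-\<i>))"
    by (simp only: pq cs_comm[OF cs])
  also have "\<dots> = q * (c (-(\<i>/2)) + q * p + c (-\<i>))"
    by (simp only: distrib_left add_ac)
  finally show ?thesis by (simp only: Z2)
qed

lemma pq_pow: "p ^ j * q ^ j = alg_poly_eval c (Bpoly j) Z"
proof (induct j)
  case 0
  then show ?case by (simp add: Bpoly_def ape_one[OF cs])
next
  case (Suc j)
  have "p ^ Suc j * q ^ Suc j = p * (p ^ j * q ^ j) * q"
    unfolding power_Suc[of p] power_Suc2[of q] by (simp only: mult.assoc)
  also have "\<dots> = p * (alg_poly_eval c (Bpoly j) Z * q)"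
    by (simp only: Suc mult.assoc)
  also have "\<dots> = p * q * alg_poly_eval c (pcompose (Bpoly j) [:-\<i>, 1:]) Z"
    by (simp only: ape_shift[OF cs Zq] mult.assoc)
  also have "\<dots> = alg_poly_eval c (Bpoly (Suc j)) Z"
    by (simp only: B_Suc ape_mult[OF cs] pq_ev[symmetric])
  finally show ?case .
qed

lemma qp_pow: "q ^ j * p ^ j = alg_poly_eval c (Apoly j) Z"
proof (induct j)
  case 0
  then show ?case by (simp add: Apoly_def ape_one[OF cs])
next
  case (Suc j)
  have "q ^ Suc j * p ^ Suc j = q * (q ^ j * p ^ j) * p"
    unfolding power_Suc[of q] power_Suc2[of p] by (simp only: mult.assoc)
  also have "\<dots> = q * (alg_poly_eval c (Apoly j) Z * p)"
    by (simp only: Suc mult.assoc)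
  also have "\<dots> = q * p * alg_poly_eval c (pcompose (Apoly j) [:\<i>, 1:]) Z"
    by (simp only: ape_shift[OF cs Zp] mult.assoc)
  also have "\<dots> = alg_poly_eval c (Apoly (Suc j)) Z"
    by (simp only: A_Suc ape_mult[OF cs] qp_ev[symmetric])
  finally show ?case .
qed

lemma word_eq:
  assumes "k \<le> n"
  shows "q ^ k * p ^ n * q ^ (n - k) = alg_poly_eval c (Apoly k * Bpoly (n - k)) Z"
proof -
  have "p ^ n = p ^ k * p ^ (n - k)" using assms by (simp add: power_add[symmetric])
  then have "q ^ k * p ^ n * q ^ (n - k) = (q ^ k * p ^ k) * (p ^ (n - k) * q ^ (n - k))"
    by (simp add: mult.assoc)
  then show ?thesis by (simp add: qp_pow pq_pow ape_mult[OF cs])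
qed

end

lemma stirling_signed:
  fixes x :: complex
  shows "(-1)^n * (\<Sum>j\<le>n. of_nat (stirling n j) * (-x)^j) = (\<Sum>j\<le>n. signed_stirling n j * x^j)"
  unfolding sum_distrib_left signed_stirling_def
  by (rule sum.cong) (simp_all add: power_minus[of x] power_add mult_ac)

lemma coeff_lin_pow_all:
  fixes a b :: complex
  shows "coeff ([:a, b:] ^ j) k = of_nat (j choose k) * b ^ k * a ^ (j - k)"
proof (cases "k \<le> j")
  case True
  then show ?thesis by (rule coeff_linear_poly_power)
next
  case False
  have "degree ([:a, b:] ^ j) \<le> degree [:a, b:] * j" by (rule degree_power_le)
  also have "\<dots> \<le> j" using degree_pCons_le[of a "[:b:]"] by simp
  finally have "coeff ([:a, b:] ^ j) k = 0" using False by (intro coeff_eq_0) simp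
  then show ?thesis using False by simp
qed

lemma reindex_coeff:
  fixes b \<beta> :: complex and s :: "nat \<Rightarrow> complex"
  assumes "k \<le> n"
  shows "(\<Sum>j\<le>n. s j * (of_nat (j choose k) * b ^ k * \<beta> ^ (j - k)))
       = b ^ k * (\<Sum>j\<le>n - k. s (j + k) * of_nat ((j + k) choose k) * \<beta> ^ j)"
proof -
  let ?g = "\<lambda>j. s j * (of_nat (j choose k) * b ^ k * \<beta> ^ (j - k))"
  have "(\<Sum>j\<le>n. ?g j) = (\<Sum>j\<in>{k..n}. ?g j)"
    by (rule sum.mono_neutral_right) (auto simp: binomial_eq_0)
  also have "{k..n} = {0 + k..(n - k) + k}" using assms by simp
  also have "(\<Sum>j\<in>{0 + k..(n - k) + k}. ?g j) = (\<Sum>j\<in>{0..n - k}. ?g (j + k))"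
    by (rule sum.shift_bounds_cl_nat_ivl)
  also have "\<dots> = b ^ k * (\<Sum>j\<le>n - k. s (j + k) * of_nat ((j + k) choose k) * \<beta> ^ j)"
    unfolding atLeast0AtMost sum_distrib_left
    by (rule sum.cong) (simp_all add: mult_ac)
  finally show ?thesis .
qed

theorem theorem3p8:
  fixes n :: nat and a :: "nat \<Rightarrow> complex"
    and c :: "complex \<Rightarrow> 'a::ring_1" and p q :: 'a
  assumes "complex_scalars c"
    and "q * p - p * q = c \<i>"
  shows "\<exists>P :: complex poly. degree P \<le> n
     \<and> (\<Sum>k\<le>n. c (a k) * q ^ k * p ^ n * q ^ (n - k))
         = alg_poly_eval c P (c (1/2) * (q * p + p * q))
     \<and> (\<forall>z. poly P z = \<i> ^ n * fact n * (\<Sum>k\<le>n. a k * ((- \<i> * z - 1/2 + of_nat k) gchoose n)))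
     \<and> (\<forall>z. poly P z = \<i> ^ n * (\<Sum>k\<le>n. a (n - k) * pochhammer (- \<i> * z + 1/2 - of_nat k) n))
     \<and> (\<forall>k\<le>n. coeff P k = (-1) ^ k * \<i> ^ (n + k) *
          (\<Sum>l\<le>n. a l * (\<Sum>j\<le>n - k. signed_stirling n (j + k) * of_nat ((j + k) choose k)
                                          * (of_nat l - 1/2) ^ j)))"
proof -
  define T where "T l = Apoly l * Bpoly (n - l)" for l
  define P where "P = (\<Sum>l\<le>n. smult (a l) (T l))"
  have polyT: "poly (T l) z = \<i>^n * (-1)^n * pochhammer (-(-\<i>*z - 1/2 + of_nat l)) n"
    if "l \<le> n" for l z
    using poly_T[OF that] T_def by simp
  have Texp: "T l = smult (\<i>^n) (\<Sum>j\<le>n. smult (signed_stirling n j) ([:of_nat l - 1/2, -\<i>:]^j))"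
    if l: "l \<le> n" for l
  proof (rule poly_eq_poly_eq_iff[THEN iffD1], rule ext)
    fix z
    define x where "x = -\<i>*z - 1/2 + of_nat l"
    have "poly (T l) z = \<i>^n * ((-1)^n * (\<Sum>j\<le>n. of_nat (stirling n j) * (-x)^j))"
      unfolding polyT[OF l] x_def[symmetric] stirling_pochhammer by (simp add: mult.assoc)
    also have "\<dots> = \<i>^n * (\<Sum>j\<le>n. signed_stirling n j * x^j)"
      by (simp only: stirling_signed)
    also have "x = poly [:of_nat l - 1/2, -\<i>:] z" by (simp add: x_def)
    finally show "poly (T l) z = poly (smult (\<i>^n) (\<Sum>j\<le>n. smult (signed_stirling n j) ([:of_nat l - 1/2, -\<i>:]^j))) z"
      by (simp add: poly_sum)
  qed
  have degT: "degree (T l) \<le> n" if l: "l \<le> n" for l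
  proof -
    have "degree (smult (signed_stirling n j) ([:of_nat l - 1/2, -\<i>:]^j)) \<le> n" if "j \<in> {..n}" for j
    proof -
      have "degree (smult (signed_stirling n j) ([:of_nat l - 1/2, -\<i>:]^j)) \<le> degree ([:of_nat l - 1/2, -\<i>:]^j)"
        by (rule degree_smult_le)
      also have "\<dots> \<le> degree [:of_nat l - 1/2, -\<i>:] * j" by (rule degree_power_le)
      also have "\<dots> \<le> n" using that by simp
      finally show ?thesis .
    qed
    then have "degree (\<Sum>j\<le>n. smult (signed_stirling n j) ([:of_nat l - 1/2, -\<i>:]^j)) \<le> n"
      by (intro degree_sum_le) auto
    then show ?thesis unfolding Texp[OF l] using degree_smult_le order_trans by blast
  qed
  have degP: "degree P \<le> n"
    unfolding P_def
    by (intro degree_sum_le) (auto simp: degT)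
  have alg: "(\<Sum>k\<le>n. c (a k) * q ^ k * p ^ n * q ^ (n - k)) = alg_poly_eval c P (c (1/2) * (q * p + p * q))"
    unfolding P_def ape_sum[OF assms(1)] ape_smult[OF assms(1)]
  proof (rule sum.cong)
    fix k assume "k \<in> {..n}"
    then have "k \<le> n" by simp
    then show "c (a k) * q ^ k * p ^ n * q ^ (n - k) = c (a k) * alg_poly_eval c (T k) (c (1/2) * (q * p + p * q))"
      unfolding T_def using word_eq[OF assms(1,2)] by (simp add: mult.assoc)
  qed simp
  have form3: "poly P z = \<i> ^ n * fact n * (\<Sum>k\<le>n. a k * ((- \<i> * z - 1/2 + of_nat k) gchoose n))" for z
    unfolding P_def poly_sum poly_smult sum_distrib_left
  proof (rule sum.cong)
    fix k assume "k \<in> {..n}"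
    then have "k \<le> n" by simp
    then show "a k * poly (T k) z = \<i> ^ n * fact n * (a k * ((- \<i> * z - 1/2 + of_nat k) gchoose n))"
      by (simp add: polyT gbinomial_pochhammer)
  qed simp
  have form4: "poly P z = \<i> ^ n * (\<Sum>k\<le>n. a (n - k) * pochhammer (- \<i> * z + 1/2 - of_nat k) n)" for z
  proof -
    have "(\<Sum>k\<le>n. a (n - k) * pochhammer (- \<i> * z + 1/2 - of_nat k) n)
        = (\<Sum>k\<le>n. a k * pochhammer (- \<i> * z + 1/2 - of_nat (n - k)) n)"
    proof -
      have "(\<Sum>k<Suc n. a (n - k) * pochhammer (- \<i> * z + 1/2 - of_nat k) n)
          = (\<Sum>k<Suc n. a (Suc n - Suc k) * pochhammer (- \<i> * z + 1/2 - of_nat (n - (Suc n - Suc k))) n)"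
        by (rule sum.cong) auto
      also have "\<dots> = (\<Sum>k<Suc n. a k * pochhammer (- \<i> * z + 1/2 - of_nat (n - k)) n)"
        by (rule sum.nat_diff_reindex)
      finally show ?thesis by (simp add: lessThan_Suc_atMost)
    qed
    also have "\<dots> = fact n * (\<Sum>k\<le>n. a k * ((- \<i> * z - 1/2 + of_nat k) gchoose n))"
      unfolding sum_distrib_left
    proof (rule sum.cong)
      fix k assume "k \<in> {..n}"
      then have k: "k \<le> n" by simp
      have e: "- \<i> * z - 1/2 + of_nat k - of_nat n + 1 = - \<i> * z + 1/2 - of_nat (n - k)"
        using k by (simp add: of_nat_diff)
      show "a k * pochhammer (- \<i> * z + 1/2 - of_nat (n - k)) n = fact n * (a k * ((- \<i> * z - 1/2 + of_nat k) gchoose n))"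
        unfolding gbinomial_pochhammer' e by simp
    qed simp
    finally show ?thesis by (simp add: form3 mult.assoc)
  qed
  have form5: "coeff P k = (-1) ^ k * \<i> ^ (n + k) *
          (\<Sum>l\<le>n. a l * (\<Sum>j\<le>n - k. signed_stirling n (j + k) * of_nat ((j + k) choose k)
                                          * (of_nat l - 1/2) ^ j))" if k: "k \<le> n" for k
    unfolding P_def coeff_sum coeff_smult sum_distrib_left[of "(-1) ^ k * \<i> ^ (n + k)"]
  proof (rule sum.cong)
    fix l assume "l \<in> {..n}"
    then have l: "l \<le> n" by simp
    have "coeff (T l) k = \<i>^n * (\<Sum>j\<le>n. signed_stirling n j * (of_nat (j choose k) * (-\<i>) ^ k * (of_nat l - 1/2) ^ (j - k)))"
      unfolding Texp[OF l] coeff_smult coeff_sum coeff_lin_pow_all by simp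
    also have "\<dots> = \<i>^n * ((-\<i>) ^ k * (\<Sum>j\<le>n - k. signed_stirling n (j + k) * of_nat ((j + k) choose k)
                                          * (of_nat l - 1/2) ^ j))"
      by (simp only: reindex_coeff[OF k])
    finally show "a l * coeff (T l) k = (-1) ^ k * \<i> ^ (n + k) * (a l * (\<Sum>j\<le>n - k. signed_stirling n (j + k) * of_nat ((j + k) choose k)
                                          * (of_nat l - 1/2) ^ j))"
      by (simp add: power_minus[of \<i>] power_add mult_ac)
  qed simp
  show ?thesis
    using degP alg form3 form4 form5 by blast
qed

end
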